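(* Let $V$ be a $2n$-dimensional complex vector space with a full flag $V_\bullet$, and let $\omega$ be a nondegenerate skew-symmetric bilinear form on $V$. Then there exists a basis $\{e_1,\dots,e_{2n}\}$ of $V$ which is compatible with the flag $V_\bullet$ and hyperbolic with respect to $\omega$.
   Context: A full flag $V_\bullet$ in $V$ is a chain of subspaces $0\subset V_1\subset\dots\subset V_{2n}=V$ with $\dim V_i=i$. A basis of $V$ is compatible with the flag $V_\bullet$ if every $V_i$ is spanned by some subset of the basis. A basis $\{e_1,\dots,e_N\}$ is hyperbolic with respect to a skew-symmetric form $\omega$ if for every $i$ either $\omega(e_i,\cdot)\equiv 0$, or there is exactly one index $j$ with $\omega(e_i,e_j)\neq 0$, and for that $j$ one has $\omega(e_i,e_j)=\pm1$. *)

theory Defs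
  imports "HOL-Analysis.Analysis"
begin

text \<open>The complex vector space V is modelled as complex^'n (coordinate space,
  vector space structure vec over the field of complex numbers).\<close>

definition bilinear_form :: "('a::field ^ 'n \<Rightarrow> 'a ^ 'n \<Rightarrow> 'a) \<Rightarrow> bool" where
  "bilinear_form \<omega> \<longleftrightarrow>
     (\<forall>x. Vector_Spaces.linear (*s) (*) (\<lambda>y. \<omega> x y)) \<and>
     (\<forall>y. Vector_Spaces.linear (*s) (*) (\<lambda>x. \<omega> x y))"

definition skew_symmetric :: "('a::field ^ 'n \<Rightarrow> 'a ^ 'n \<Rightarrow> 'a) \<Rightarrow> bool" where
  "skew_symmetric \<omega> \<longleftrightarrow> (\<forall>x y. \<omega> x y = - \<omega> y x)"

definition nondegenerate :: "('a::field ^ 'n \<Rightarrow> 'a ^ 'n \<Rightarrow> 'a) \<Rightarrow> bool" where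
  "nondegenerate \<omega> \<longleftrightarrow> (\<forall>x. (\<forall>y. \<omega> x y = 0) \<longrightarrow> x = 0)"

text \<open>A full flag 0 = F 0 \<subset> F 1 \<subset> ... \<subset> F N = V, N = dim V, indexed by 0..N.\<close>
definition full_flag :: "(nat \<Rightarrow> ('a::field ^ 'n) set) \<Rightarrow> bool" where
  "full_flag F \<longleftrightarrow>
     (\<forall>i \<le> CARD('n). vec.subspace (F i) \<and> vec.dim (F i) = i) \<and>
     (\<forall>i < CARD('n). F i \<subseteq> F (Suc i))"

text \<open>A basis indexed by {..<N}: e 0, ..., e (N-1).\<close>
definition is_basis :: "(nat \<Rightarrow> 'a::field ^ 'n) \<Rightarrow> bool" where
  "is_basis e \<longleftrightarrow> inj_on e {..<CARD('n)} \<and> vec.independent (e ` {..<CARD('n)}) \<and>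
     vec.span (e ` {..<CARD('n)}) = UNIV"

definition compatible_with_flag :: "(nat \<Rightarrow> 'a::field ^ 'n) \<Rightarrow> (nat \<Rightarrow> ('a ^ 'n) set) \<Rightarrow> bool" where
  "compatible_with_flag e F \<longleftrightarrow>
     (\<forall>i \<le> CARD('n). \<exists>S \<subseteq> {..<CARD('n)}. F i = vec.span (e ` S))"

definition hyperbolic :: "(nat \<Rightarrow> 'a::field ^ 'n) \<Rightarrow> ('a ^ 'n \<Rightarrow> 'a ^ 'n \<Rightarrow> 'a) \<Rightarrow> bool" where
  "hyperbolic e \<omega> \<longleftrightarrow>
     (\<forall>i < CARD('n). (\<forall>v. \<omega> (e i) v = 0) \<or>
        (\<exists>j < CARD('n). \<omega> (e i) (e j) \<noteq> 0 \<and>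
           (\<forall>k < CARD('n). \<omega> (e i) (e k) \<noteq> 0 \<longrightarrow> k = j) \<and>
           (\<omega> (e i) (e j) = 1 \<or> \<omega> (e i) (e j) = -1)))"

end

theory Submission
  imports Defs
begin

lemma lin_facts:
  fixes f :: "complex^'n \<Rightarrow> complex"
  assumes "Vector_Spaces.linear (*s) (*) f"
  shows "f (x+y) = f x + f y" "f (c *s x) = c * f x" "f (x - y) = f x - f y" "f 0 = 0" "f (-x) = - f x"
proof -
  interpret L: Vector_Spaces.linear "(*s)" "(*)" f by fact
  show "f (x+y) = f x + f y" by (rule L.add)
  show "f (c *s x) = c * f x" by (rule L.scale)
  show "f (x - y) = f x - f y" by (rule L.diff)
  show "f 0 = 0" by (rule L.zero)
  show "f (-x) = - f x" by (rule L.neg)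
qed

lemma bf_facts:
  fixes \<omega> :: "complex ^ 'n \<Rightarrow> complex ^ 'n \<Rightarrow> complex"
  assumes "bilinear_form \<omega>"
  shows "\<omega> x (y+z) = \<omega> x y + \<omega> x z" "\<omega> x (c *s y) = c * \<omega> x y"
    "\<omega> x (y - z) = \<omega> x y - \<omega> x z" "\<omega> x 0 = 0"
    "\<omega> (y+z) x = \<omega> y x + \<omega> z x" "\<omega> (c *s y) x = c * \<omega> y x"
    "\<omega> (y - z) x = \<omega> y x - \<omega> z x" "\<omega> 0 x = 0"
proof -
  have l1: "Vector_Spaces.linear (*s) (*) (\<lambda>y. \<omega> x y)" for x
    using assms unfolding bilinear_form_def by blast
  have l2: "Vector_Spaces.linear (*s) (*) (\<lambda>y. \<omega> y x)" for x
    using assms unfolding bilinear_form_def by blast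
  show "\<omega> x (y+z) = \<omega> x y + \<omega> x z" "\<omega> x (c *s y) = c * \<omega> x y"
    "\<omega> x (y - z) = \<omega> x y - \<omega> x z" "\<omega> x 0 = 0"
    using lin_facts[OF l1[of x]] by auto
  show "\<omega> (y+z) x = \<omega> y x + \<omega> z x" "\<omega> (c *s y) x = c * \<omega> y x"
    "\<omega> (y - z) x = \<omega> y x - \<omega> z x" "\<omega> 0 x = 0"
    using lin_facts[OF l2[of x]] by auto
qed

lemma chain_Inter:
  assumes "finite N" "N \<noteq> {}" "\<forall>U\<in>N. \<forall>U'\<in>N. U \<subseteq> U' \<or> U' \<subseteq> U"
  shows "\<Inter>N \<in> N"
  using assms
proof (induction N rule: finite_ne_induct)
  case (singleton x)
  then show ?case by simp
next
  case (insert x F)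
  then have h: "\<Inter>F \<in> F" by blast
  then have "x \<subseteq> \<Inter>F \<or> \<Inter>F \<subseteq> x" using insert.prems by blast
  then show ?case using h by (auto simp: Int_absorb1 Int_absorb2)
qed

definition hypB :: "(complex ^ 'n \<Rightarrow> complex ^ 'n \<Rightarrow> complex) \<Rightarrow> (complex ^ 'n) set \<Rightarrow> bool" where
  "hypB \<omega> B \<longleftrightarrow> (\<forall>b\<in>B. \<exists>c\<in>B. (\<omega> b c = 1 \<or> \<omega> b c = -1) \<and> (\<forall>d\<in>B. \<omega> b d \<noteq> 0 \<longrightarrow> d = c))"

lemma main:
  fixes \<omega> :: "complex ^ 'n \<Rightarrow> complex ^ 'n \<Rightarrow> complex"
  assumes bf: "bilinear_form \<omega>" and sk: "skew_symmetric \<omega>"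
  shows "vec.subspace W \<Longrightarrow> (\<forall>x\<in>W. (\<forall>y\<in>W. \<omega> x y = 0) \<longrightarrow> x = 0) \<Longrightarrow> finite C \<Longrightarrow> W \<in> C
    \<Longrightarrow> (\<forall>U\<in>C. vec.subspace U \<and> U \<subseteq> W) \<Longrightarrow> (\<forall>U\<in>C. \<forall>U'\<in>C. U \<subseteq> U' \<or> U' \<subseteq> U)
    \<Longrightarrow> \<exists>B. B \<subseteq> W \<and> vec.independent B \<and> vec.span B = W \<and> hypB \<omega> B \<and> (\<forall>U\<in>C. \<exists>S\<subseteq>B. U = vec.span S)"
proof (induction "vec.dim W" arbitrary: W C rule: less_induct)
  case less
  note bfs = bf_facts[OF bf]
  have skw: "\<omega> x y = - \<omega> y x" for x y using sk unfolding skew_symmetric_def by blast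
  have diag: "\<omega> x x = 0" for x using skw[of x x] by simp
  show ?case
  proof (cases "W = {0}")
    case True
    have "\<forall>U\<in>C. U = {0}"
    proof
      fix U assume "U \<in> C"
      then have "vec.subspace U" "U \<subseteq> W" using less.prems by auto
      then show "U = {0}" using True vec.subspace_0 by auto
    qed
    then show ?thesis using True
      by (intro exI[of _ "{}"]) (auto simp: hypB_def vec.span_empty vec.independent_empty)
  next
    case False
    define N where "N = {U\<in>C. U \<noteq> {0}}"
    have WN: "W \<in> N" using False less.prems unfolding N_def by blast
    have "\<Inter>N \<in> N" apply (rule chain_Inter) using less.prems WN unfolding N_def by auto
    then have U0: "\<Inter>N \<in> C" "\<Inter>N \<noteq> {0}" unfolding N_def by auto
    then have "vec.subspace (\<Inter>N)" using less.prems by blast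
    then obtain b1 where b1: "b1 \<in> \<Inter>N" "b1 \<noteq> 0" using U0 vec.subspace_0 by blast
    have b1N: "\<forall>U\<in>C. U \<noteq> {0} \<longrightarrow> b1 \<in> U" using b1 unfolding N_def by blast
    have b1W: "b1 \<in> W" using b1N False less.prems by blast
    define N2 where "N2 = {U\<in>C. \<exists>y\<in>U. \<omega> b1 y \<noteq> 0}"
    have WN2: "W \<in> N2" using less.prems b1W b1 unfolding N2_def by blast
    have "\<Inter>N2 \<in> N2" apply (rule chain_Inter) using less.prems WN2 unfolding N2_def by auto
    then obtain y where y: "y \<in> \<Inter>N2" "\<omega> b1 y \<noteq> 0" and U1: "\<Inter>N2 \<in> C" unfolding N2_def by auto
    define b2 where "b2 = (1 / \<omega> b1 y) *s y"
    have b12: "\<omega> b1 b2 = 1" using y by (simp add: b2_def bfs)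
    have b21: "\<omega> b2 b1 = -1" using skw[of b2 b1] b12 by simp
    have b2N: "\<forall>U\<in>C. (\<exists>y\<in>U. \<omega> b1 y \<noteq> 0) \<longrightarrow> b2 \<in> U"
    proof (intro ballI impI)
      fix U assume "U \<in> C" "\<exists>y\<in>U. \<omega> b1 y \<noteq> 0"
      then have "y \<in> U" "vec.subspace U" using y less.prems unfolding N2_def by auto
      then show "b2 \<in> U" unfolding b2_def by (simp add: vec.subspace_scale)
    qed
    have b2W: "b2 \<in> W" using b2N WN2 unfolding N2_def by blast
    define W' where "W' = {w\<in>W. \<omega> b1 w = 0 \<and> \<omega> b2 w = 0}"
    have subW': "vec.subspace W'"
      using less.prems(1) unfolding W'_def vec.subspace_def by (auto simp: bfs)
    have b1nW': "b1 \<notin> W'" using b21 unfolding W'_def by auto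
    have b2nW': "b2 \<notin> W'" using b12 unfolding W'_def by auto
    have "W' \<subset> W" using b1W b1nW' unfolding W'_def by blast
    then have dimlt: "vec.dim W' < vec.dim W"
      using vec.dim_psubset[of W' W] subW' less.prems(1) by (simp add: vec.span_eq_iff[THEN iffD2])
    define p where "p u = u - \<omega> b1 u *s b2 + \<omega> b2 u *s b1" for u
    have pW': "p u \<in> W'" if "u \<in> W" for u
    proof -
      have "p u \<in> W" unfolding p_def using that b1W b2W less.prems(1)
        by (intro vec.subspace_add vec.subspace_diff vec.subspace_scale) auto
      moreover have "\<omega> b1 (p u) = 0" unfolding p_def by (simp add: bfs b12 diag)
      moreover have "\<omega> b2 (p u) = 0" unfolding p_def by (simp add: bfs b21 diag)
      ultimately show ?thesis unfolding W'_def by blast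
    qed
    have pdec: "u = p u + \<omega> b1 u *s b2 - \<omega> b2 u *s b1" for u
      unfolding p_def by (simp add: algebra_simps)
    have nd': "\<forall>x\<in>W'. (\<forall>y\<in>W'. \<omega> x y = 0) \<longrightarrow> x = 0"
    proof (intro ballI impI)
      fix x assume xW': "x \<in> W'" and h: "\<forall>y\<in>W'. \<omega> x y = 0"
      have xb: "\<omega> x b1 = 0" "\<omega> x b2 = 0" using xW' skw[of x b1] skw[of x b2] unfolding W'_def by auto
      have "\<omega> x u = 0" if "u \<in> W" for u
      proof -
        have "\<omega> x u = \<omega> x (p u + \<omega> b1 u *s b2 - \<omega> b2 u *s b1)" using pdec[of u] by simp
        also have "\<dots> = \<omega> x (p u)" by (simp add: bfs xb)
        also have "\<dots> = 0" using h pW' that by blast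
        finally show ?thesis .
      qed
      then show "x = 0" using less.prems(2) xW' unfolding W'_def by blast
    qed
    define C' where "C' = (\<lambda>U. U \<inter> W') ` C"
    have c1: "W' \<in> C'" unfolding C'_def using less.prems(4) W'_def by blast
    have c2: "finite C'" unfolding C'_def using less.prems(3) by simp
    have c3: "\<forall>U\<in>C'. vec.subspace U \<and> U \<subseteq> W'"
      unfolding C'_def using less.prems(5) subW' vec.subspace_inter by blast
    have c4: "\<forall>U\<in>C'. \<forall>U'\<in>C'. U \<subseteq> U' \<or> U' \<subseteq> U"
      unfolding C'_def using less.prems(6) by blast
    have IH: "\<exists>B. B \<subseteq> W' \<and> vec.independent B \<and> vec.span B = W' \<and> hypB \<omega> B \<and> (\<forall>U\<in>C'. \<exists>S\<subseteq>B. U = vec.span S)"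
      by (rule less.hyps[OF dimlt subW' nd' c2 c1 c3 c4])
    then obtain B' where B': "B' \<subseteq> W'" "vec.independent B'" "vec.span B' = W'" "hypB \<omega> B'"
      "\<forall>U\<in>C'. \<exists>S\<subseteq>B'. U = vec.span S"
      by (elim exE conjE) simp
    define B where "B = insert b1 (insert b2 B')"
    have BW: "B \<subseteq> W" using B'(1) b1W b2W unfolding B_def W'_def by auto
    have ind2: "vec.independent (insert b2 B')"
      using B' b2nW' by (simp add: vec.independent_insert)
    have b1ns: "b1 \<notin> vec.span (insert b2 B')"
    proof
      assume "b1 \<in> vec.span (insert b2 B')"
      then obtain k where "b1 - k *s b2 \<in> W'" using B'(3) by (auto simp: vec.span_insert)
      then have "\<omega> b2 (b1 - k *s b2) = 0" unfolding W'_def by blast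
      then show False by (simp add: bfs b21 diag)
    qed
    have indB: "vec.independent B"
      unfolding B_def using ind2 b1ns by (simp add: vec.independent_insert vec.span_base)
    have spB: "vec.span B = W"
    proof
      show "vec.span B \<subseteq> W" using BW less.prems(1) by (simp add: vec.span_minimal)
      show "W \<subseteq> vec.span B"
      proof
        fix u assume "u \<in> W"
        then have "p u \<in> vec.span B'" using pW' B'(3) by blast
        then have "p u \<in> vec.span B" unfolding B_def by (meson subset_insertI vec.span_mono subsetD)
        moreover have "b1 \<in> vec.span B" "b2 \<in> vec.span B" unfolding B_def by (auto intro: vec.span_base)
        ultimately have "p u + \<omega> b1 u *s b2 - \<omega> b2 u *s b1 \<in> vec.span B"
          by (intro vec.span_add vec.span_diff vec.span_scale)
        then show "u \<in> vec.span B" using pdec[of u] by simp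
      qed
    qed
    have B'0: "\<omega> b1 d = 0" "\<omega> b2 d = 0" "\<omega> d b1 = 0" "\<omega> d b2 = 0" if "d \<in> B'" for d
      using that B'(1) skw[of d b1] skw[of d b2] unfolding W'_def by auto
    have hB: "hypB \<omega> B"
      unfolding hypB_def
    proof
      fix b assume "b \<in> B"
      then consider "b = b1" | "b = b2" | "b \<in> B'" unfolding B_def by blast
      then show "\<exists>c\<in>B. (\<omega> b c = 1 \<or> \<omega> b c = - 1) \<and> (\<forall>d\<in>B. \<omega> b d \<noteq> 0 \<longrightarrow> d = c)"
      proof cases
        case 1
        show ?thesis using 1 b12 diag B'0 unfolding B_def by (intro bexI[of _ b2]) auto
      next
        case 2
        show ?thesis using 2 b21 diag B'0 unfolding B_def by (intro bexI[of _ b1]) auto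
      next
        case 3
        then obtain c where c: "c \<in> B'" "\<omega> b c = 1 \<or> \<omega> b c = - 1" "\<forall>d\<in>B'. \<omega> b d \<noteq> 0 \<longrightarrow> d = c"
          using B'(4) unfolding hypB_def by blast
        show ?thesis using 3 c B'0 unfolding B_def by (intro bexI[of _ c]) auto
      qed
    qed
    have compat: "\<forall>U\<in>C. \<exists>S\<subseteq>B. U = vec.span S"
    proof
      fix U assume UC: "U \<in> C"
      then obtain S' where S': "S' \<subseteq> B'" "U \<inter> W' = vec.span S'" using B'(5) unfolding C'_def by blast
      have subU: "vec.subspace U" "U \<subseteq> W" using less.prems(5) UC by auto
      have S'U: "S' \<subseteq> U" using S' vec.span_base by blast
      show "\<exists>S\<subseteq>B. U = vec.span S"
      proof (cases "U = {0}")
        case True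
        then show ?thesis by (intro exI[of _ "{}"]) (auto simp: vec.span_empty)
      next
        case False
        then have b1U: "b1 \<in> U" using b1N UC by blast
        show ?thesis
        proof (cases "\<exists>y\<in>U. \<omega> b1 y \<noteq> 0")
          case True
          then have b2U: "b2 \<in> U" using b2N UC by blast
          define S where "S = insert b1 (insert b2 S')"
          have "S \<subseteq> B" using S' unfolding S_def B_def by blast
          moreover have "U = vec.span S"
          proof
            show "vec.span S \<subseteq> U" using S'U b1U b2U subU unfolding S_def by (simp add: vec.span_minimal)
            show "U \<subseteq> vec.span S"
            proof
              fix u assume uU: "u \<in> U"
              have "p u \<in> U" unfolding p_def using uU b1U b2U subU(1)
                by (intro vec.subspace_add vec.subspace_diff vec.subspace_scale) auto
              then have "p u \<in> vec.span S'" using pW' uU subU S' by blast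
              then have "p u \<in> vec.span S" unfolding S_def by (meson subset_insertI vec.span_mono subsetD)
              moreover have "b1 \<in> vec.span S" "b2 \<in> vec.span S" unfolding S_def by (auto intro: vec.span_base)
              ultimately have "p u + \<omega> b1 u *s b2 - \<omega> b2 u *s b1 \<in> vec.span S"
                by (intro vec.span_add vec.span_diff vec.span_scale)
              then show "u \<in> vec.span S" using pdec[of u] by simp
            qed
          qed
          ultimately show ?thesis by blast
        next
          case False
          define S where "S = insert b1 S'"
          have "S \<subseteq> B" using S' unfolding S_def B_def by blast
          moreover have "U = vec.span S"
          proof
            show "vec.span S \<subseteq> U" using S'U b1U subU unfolding S_def by (simp add: vec.span_minimal)
            show "U \<subseteq> vec.span S"
            proof
              fix u assume uU: "u \<in> U"
              have z: "\<omega> b1 u = 0" using False uU by blast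
              have "p u \<in> U" unfolding p_def using uU b1U subU(1) z
                by (simp add: vec.subspace_add vec.subspace_scale)
              then have "p u \<in> vec.span S'" using pW' uU subU S' by blast
              then have "p u \<in> vec.span S" unfolding S_def by (meson subset_insertI vec.span_mono subsetD)
              moreover have "b1 \<in> vec.span S" unfolding S_def by (auto intro: vec.span_base)
              ultimately have "p u - \<omega> b2 u *s b1 \<in> vec.span S"
                by (intro vec.span_add vec.span_diff vec.span_scale)
              then show "u \<in> vec.span S" using pdec[of u] z by simp
            qed
          qed
          ultimately show ?thesis by blast
        qed
      qed
    qed
    show ?thesis using BW indB spB hB compat by blast
  qed
qed

lemma flag_mono:
  assumes "\<forall>i<N. F i \<subseteq> F (Suc i)" "i \<le> j" "j \<le> N"
  shows "F i \<subseteq> F j"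
  using assms(2,3)
proof (induction j)
  case 0
  then show ?case by simp
next
  case (Suc j)
  show ?case
  proof (cases "i = Suc j")
    case True then show ?thesis by simp
  next
    case False
    then have "F i \<subseteq> F j" using Suc by simp
    also have "F j \<subseteq> F (Suc j)" using assms(1) Suc.prems by simp
    finally show ?thesis .
  qed
qed

theorem lemma2:
  fixes n :: nat
    and F :: "nat \<Rightarrow> (complex ^ 'n) set"
    and \<omega> :: "complex ^ 'n \<Rightarrow> complex ^ 'n \<Rightarrow> complex"
  assumes "CARD('n) = 2 * n"
    and "full_flag F"
    and "bilinear_form \<omega>"
    and "skew_symmetric \<omega>"
    and "nondegenerate \<omega>"
  shows "\<exists>e :: nat \<Rightarrow> complex ^ 'n. is_basis e \<and> compatible_with_flag e F \<and> hyperbolic e \<omega>"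
proof -
  define N where "N = CARD('n)"
  have dU: "vec.dim (UNIV :: (complex ^ 'n) set) = N" unfolding N_def by (rule vec_dim_card)
  have ff1: "\<forall>i\<le>N. vec.subspace (F i) \<and> vec.dim (F i) = i" and ff2: "\<forall>i<N. F i \<subseteq> F (Suc i)"
    using assms(2) unfolding full_flag_def N_def by auto
  have FN: "F N = UNIV"
  proof (rule ccontr)
    assume "F N \<noteq> UNIV"
    then have "F N \<subset> UNIV" by blast
    then have "vec.dim (F N) < vec.dim (UNIV :: (complex ^ 'n) set)"
      using vec.dim_psubset[of "F N" UNIV] ff1 by (simp add: vec.span_eq_iff[THEN iffD2] vec.span_UNIV)
    then show False using ff1 dU by (metis order.refl less_irrefl)
  qed
  define C where "C = F ` {..N}"
  have "\<exists>B. B \<subseteq> UNIV \<and> vec.independent B \<and> vec.span B = UNIV \<and> hypB \<omega> B \<and> (\<forall>U\<in>C. \<exists>S\<subseteq>B. U = vec.span S)"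
  proof (rule main[OF assms(3,4)])
    show "vec.subspace (UNIV :: (complex ^ 'n) set)" by (rule vec.subspace_UNIV)
    show "\<forall>x\<in>UNIV. (\<forall>y\<in>UNIV. \<omega> x y = 0) \<longrightarrow> x = 0" using assms(5) unfolding nondegenerate_def by blast
    show "finite C" unfolding C_def by simp
    show "UNIV \<in> C" unfolding C_def using FN by force
    show "\<forall>U\<in>C. vec.subspace U \<and> U \<subseteq> UNIV" unfolding C_def using ff1 by auto
    show "\<forall>U\<in>C. \<forall>U'\<in>C. U \<subseteq> U' \<or> U' \<subseteq> U"
      unfolding C_def using flag_mono[OF ff2] by (metis atMost_iff imageE nat_le_linear)
  qed
  then obtain B where B: "vec.independent B" "vec.span B = UNIV" "hypB \<omega> B" "\<forall>U\<in>C. \<exists>S\<subseteq>B. U = vec.span S"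
    by blast
  have finB: "finite B" using B(1) vec.finiteI_independent by blast
  have cardB: "card B = N"
    using vec.dim_span_eq_card_independent[OF B(1)] B(2) dU by simp
  obtain e where e: "bij_betw e {0..<card B} B" using ex_bij_betw_nat_finite[OF finB] by blast
  then have e': "bij_betw e {..<N} B" using cardB by (simp add: atLeast0LessThan)
  have inj: "inj_on e {..<N}" and img: "e ` {..<N} = B"
    using bij_betw_imp_inj_on[OF e'] bij_betw_imp_surj_on[OF e'] by auto
  have "is_basis e" unfolding is_basis_def N_def[symmetric] using inj img B by simp
  moreover have "compatible_with_flag e F"
    unfolding compatible_with_flag_def N_def[symmetric]
  proof (intro allI impI)
    fix i assume "i \<le> N"
    then have "F i \<in> C" unfolding C_def by simp
    then obtain S' where S': "S' \<subseteq> B" "F i = vec.span S'" using B(4) by blast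
    define S where "S = {k \<in> {..<N}. e k \<in> S'}"
    have eS: "e ` S = S'" unfolding S_def using S' img by auto
    have "S \<subseteq> {..<N}" unfolding S_def by blast
    then show "\<exists>S\<subseteq>{..<N}. F i = vec.span (e ` S)" using S' eS by (intro exI[of _ S]) simp
  qed
  moreover have "hyperbolic e \<omega>"
    unfolding hyperbolic_def N_def[symmetric]
  proof (intro allI impI disjI2)
    fix i assume i: "i < N"
    then have "e i \<in> B" using img by blast
    then obtain c where c: "c \<in> B" "\<omega> (e i) c = 1 \<or> \<omega> (e i) c = -1" "\<forall>d\<in>B. \<omega> (e i) d \<noteq> 0 \<longrightarrow> d = c"
      using B(3) unfolding hypB_def by blast
    then obtain j where j: "j < N" "c = e j" using img by blast
    show "\<exists>j<N. \<omega> (e i) (e j) \<noteq> 0 \<and> (\<forall>k<N. \<omega> (e i) (e k) \<noteq> 0 \<longrightarrow> k = j) \<and>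
           (\<omega> (e i) (e j) = 1 \<or> \<omega> (e i) (e j) = -1)"
    proof (intro exI[of _ j] conjI allI impI)
      show "j < N" by fact
      show "\<omega> (e i) (e j) \<noteq> 0" using c j by auto
      show "\<omega> (e i) (e j) = 1 \<or> \<omega> (e i) (e j) = -1" using c j by auto
      fix k assume "k < N" "\<omega> (e i) (e k) \<noteq> 0"
      then have "e k = e j" using c j img by blast
      then show "k = j" using inj \<open>k < N\<close> j(1) by (meson inj_on_def lessThan_iff)
    qed
  qed
  ultimately show ?thesis by blast
qed

end
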